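(* Let $g\colon A\to D$ be an epimorphism from a finitely generated lattice $A$ onto a lattice $D$ with finite generating set $P$ for which $D$ satisfies Dean's condition (D). Then $g$ is lower bounded if and only if for every $p\in P$ the preimage $g^{-1}(p)$ has a least element.
   Context: A lattice homomorphism $g\colon A\to D$ is lower bounded if for every $d\in D$ the set $\{x\in A: g(x)\ge d\}$ is empty or has a least element (for surjective $g$: every preimage $g^{-1}(d)$ has a least element). Dean's condition (D) for $D$ with finite generating set $P$: for all finite $S,T\subseteq D$ with $\bigwedge S\le\bigvee T$, either some $s\in S$ has $s\le\bigvee T$, or some $t\in T$ has $\bigwedge S\le t$, or some $p\in P$ has $\bigwedge S\le p\le\bigvee T$. *)

theory Defs
  imports Main
begin

text \<open>Lattices are represented by types of class lattice; the whole type is the carrier.\<close>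

inductive_set lat_gen :: "'a::lattice set \<Rightarrow> 'a set" for X :: "'a set" where
  base: "x \<in> X \<Longrightarrow> x \<in> lat_gen X"
| inf: "x \<in> lat_gen X \<Longrightarrow> y \<in> lat_gen X \<Longrightarrow> inf x y \<in> lat_gen X"
| sup: "x \<in> lat_gen X \<Longrightarrow> y \<in> lat_gen X \<Longrightarrow> sup x y \<in> lat_gen X"

definition generates :: "'a::lattice set \<Rightarrow> bool" where
  "generates X \<longleftrightarrow> lat_gen X = UNIV"

definition finitely_generated_lattice :: "'a::lattice itself \<Rightarrow> bool" where
  "finitely_generated_lattice _ \<longleftrightarrow> (\<exists>X::'a set. finite X \<and> generates X)"

definition lattice_hom :: "('a::lattice \<Rightarrow> 'b::lattice) \<Rightarrow> bool" where
  "lattice_hom g \<longleftrightarrow> (\<forall>x y. g (inf x y) = inf (g x) (g y) \<and> g (sup x y) = sup (g x) (g y))"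

definition lower_bounded :: "('a::lattice \<Rightarrow> 'b::lattice) \<Rightarrow> bool" where
  "lower_bounded g \<longleftrightarrow> (\<forall>d. {x. d \<le> g x} = {} \<or> (\<exists>m. m \<in> {x. d \<le> g x} \<and> (\<forall>x\<in>{x. d \<le> g x}. m \<le> x)))"

definition has_least :: "'a::order set \<Rightarrow> bool" where
  "has_least S \<longleftrightarrow> (\<exists>m\<in>S. \<forall>x\<in>S. m \<le> x)"

definition dean_condition :: "'b::lattice set \<Rightarrow> bool" where
  "dean_condition P \<longleftrightarrow>
    (\<forall>S T. finite S \<and> S \<noteq> {} \<and> finite T \<and> T \<noteq> {} \<and> Inf_fin S \<le> Sup_fin T \<longrightarrow>
       (\<exists>s\<in>S. s \<le> Sup_fin T) \<or> (\<exists>t\<in>T. Inf_fin S \<le> t) \<or>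
       (\<exists>p\<in>P. Inf_fin S \<le> p \<and> p \<le> Sup_fin T))"

end

theory Submission
  imports Defs
begin

lemma hom_mono:
  assumes "lattice_hom g" "x \<le> y" shows "g x \<le> g y"
proof -
  have "inf x y = x" using assms(2) by (simp add: inf_absorb1)
  hence "g x = inf (g x) (g y)" using assms(1) unfolding lattice_hom_def by metis
  thus ?thesis by (metis inf.cobounded2)
qed

lemma hom_Inf_fin:
  assumes "lattice_hom g" "finite M" "M \<noteq> {}" "\<forall>m\<in>M. d \<le> g m"
  shows "d \<le> g (Inf_fin M)"
  using assms(2,3,4)
proof (induction M rule: finite_ne_induct)
  case (singleton x) then show ?case by simp
next
  case (insert x F)
  have "g (Inf_fin (insert x F)) = inf (g x) (g (Inf_fin F))"
    using insert.hyps assms(1) unfolding lattice_hom_def by simp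
  then show ?case using insert by simp
qed

definition LB :: "('a::lattice \<Rightarrow> 'b::lattice) \<Rightarrow> 'b \<Rightarrow> bool" where
  "LB g d \<longleftrightarrow> (\<exists>m. d \<le> g m \<and> (\<forall>y. d \<le> g y \<longrightarrow> m \<le> y))"

lemma LB_meet:
  fixes g :: "'a::lattice \<Rightarrow> 'b::lattice"
  fixes X :: "'a set"
  assumes hom: "lattice_hom g" and X: "finite X" "lat_gen X = UNIV"
    and dean: "dean_condition P" and fP: "finite P"
    and bp: "\<forall>p\<in>P. p \<le> g (bp p) \<and> (\<forall>y. p \<le> g y \<longrightarrow> bp p \<le> y)"
    and L1: "LB g d1" and L2: "LB g d2"
  shows "LB g (inf d1 d2)"
proof -
  define d where "d = inf d1 d2"
  obtain m1 where m1: "d1 \<le> g m1" "\<forall>y. d1 \<le> g y \<longrightarrow> m1 \<le> y" using L1 unfolding LB_def by blast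
  obtain m2 where m2: "d2 \<le> g m2" "\<forall>y. d2 \<le> g y \<longrightarrow> m2 \<le> y" using L2 unfolding LB_def by blast
  define M where "M = {m1, m2} \<union> {x\<in>X. d \<le> g x} \<union> bp ` {p\<in>P. d \<le> p}"
  have fM: "finite M" "M \<noteq> {}" unfolding M_def using X fP by auto
  have a1: "d \<le> g m1" unfolding d_def using m1 by (meson inf.coboundedI1)
  have a2: "d \<le> g m2" unfolding d_def using m2 by (meson inf.coboundedI2)
  have a3: "d \<le> g (bp p)" if "p \<in> P" "d \<le> p" for p using bp that by (meson order_trans)
  have allM: "\<forall>m\<in>M. d \<le> g m"
    unfolding M_def using a1 a2 a3 by blast
  have gm: "d \<le> g (Inf_fin M)" using hom_Inf_fin[OF hom fM allM] .
  have le: "Inf_fin M \<le> m" if "m \<in> M" for m using fM that by (simp add: Inf_fin.coboundedI)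
  have main: "y \<in> lat_gen X \<Longrightarrow> d \<le> g y \<Longrightarrow> Inf_fin M \<le> y" for y
  proof (induction y rule: lat_gen.induct)
    case (base x)
    then have "x \<in> M" unfolding M_def by auto
    then show ?case using le by simp
  next
    case (inf x y)
    have "g (inf x y) = inf (g x) (g y)" using hom unfolding lattice_hom_def by simp
    then show ?case using inf by simp
  next
    case (sup y1 y2)
    have gs: "g (sup y1 y2) = sup (g y1) (g y2)" using hom unfolding lattice_hom_def by simp
    have "Inf_fin {d1, d2} \<le> Sup_fin {g y1, g y2}" using sup.prems gs d_def by simp
    then have "(\<exists>s\<in>{d1,d2}. s \<le> Sup_fin {g y1, g y2}) \<or> (\<exists>t\<in>{g y1, g y2}. Inf_fin {d1,d2} \<le> t) \<or>
       (\<exists>p\<in>P. Inf_fin {d1,d2} \<le> p \<and> p \<le> Sup_fin {g y1, g y2})"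
      using dean[unfolded dean_condition_def, rule_format, of "{d1,d2}" "{g y1, g y2}"] by blast
    then show ?case
    proof (elim disjE bexE)
      fix s assume "s \<in> {d1, d2}" "s \<le> Sup_fin {g y1, g y2}"
      then have "d1 \<le> g (sup y1 y2) \<or> d2 \<le> g (sup y1 y2)" using gs by auto
      then have "m1 \<le> sup y1 y2 \<or> m2 \<le> sup y1 y2" using m1 m2 by blast
      moreover have "m1 \<in> M" "m2 \<in> M" unfolding M_def by auto
      ultimately show ?case using le by (meson order_trans)
    next
      fix t assume "t \<in> {g y1, g y2}" "Inf_fin {d1, d2} \<le> t"
      then have "d \<le> g y1 \<or> d \<le> g y2" using d_def by auto
      then have "Inf_fin M \<le> y1 \<or> Inf_fin M \<le> y2" using sup.IH by blast
      then show ?case by (meson le_supI1 le_supI2)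
    next
      fix p assume p: "p \<in> P" "Inf_fin {d1, d2} \<le> p \<and> p \<le> Sup_fin {g y1, g y2}"
      then have "d \<le> p" "p \<le> g (sup y1 y2)" using d_def gs by auto
      then have "bp p \<in> M" "bp p \<le> sup y1 y2" using p bp unfolding M_def by auto
      then show ?case using le by (meson order_trans)
    qed
  qed
  have "\<forall>y. d \<le> g y \<longrightarrow> Inf_fin M \<le> y"
  proof (intro allI impI)
    fix y assume "d \<le> g y"
    moreover have "y \<in> lat_gen X" using X(2) by simp
    ultimately show "Inf_fin M \<le> y" using main by simp
  qed
  then show ?thesis unfolding LB_def d_def[symmetric] using gm by (intro exI conjI)
qed

theorem mainTheorem11:
  fixes g :: "'a::lattice \<Rightarrow> 'b::lattice" and P :: "'b set"
  assumes "finitely_generated_lattice TYPE('a)"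
    and "lattice_hom g" and "surj g"
    and "finite P" and "generates P"
    and "dean_condition P"
  shows "lower_bounded g \<longleftrightarrow> (\<forall>p\<in>P. has_least (g -` {p}))"
proof
  assume lb: "lower_bounded g"
  show "\<forall>p\<in>P. has_least (g -` {p})"
  proof
    fix p assume "p \<in> P"
    have "\<exists>x. p = g x" using assms(3) by (rule surjD)
    then obtain x where x0: "p = g x" by (rule exE)
    then have x: "g x = p" by (rule sym)
    have "x \<in> {y. p \<le> g y}" using x by simp
    then have ne: "{y. p \<le> g y} \<noteq> {}" by (rule ex_in_conv[THEN iffD1, OF exI])
    have "\<exists>m. m \<in> {y. p \<le> g y} \<and> (\<forall>z\<in>{y. p \<le> g y}. m \<le> z)"
    proof -
      have "{y. p \<le> g y} = {} \<or> (\<exists>m. m \<in> {y. p \<le> g y} \<and> (\<forall>z\<in>{y. p \<le> g y}. m \<le> z))"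
        using lb unfolding lower_bounded_def by (rule spec)
      then show ?thesis using ne by fast
    qed
    then obtain m where m0: "m \<in> {y. p \<le> g y}" "\<forall>z\<in>{y. p \<le> g y}. m \<le> z" by (elim exE conjE)
    have pm: "p \<le> g m" using m0(1) by (rule CollectD)
    have mx: "m \<le> x" using m0(2) x by simp
    have "g m \<le> g x" using hom_mono[OF assms(2) mx] .
    then have gmp: "g m = p" using pm x by (rule_tac order.antisym) simp_all
    then have "m \<in> g -` {p}" by simp
    moreover have "\<forall>y\<in>g -` {p}. m \<le> y" using m0(2) by simp
    ultimately show "has_least (g -` {p})" unfolding has_least_def by blast
  qed
next
  assume H: "\<forall>p\<in>P. has_least (g -` {p})"
  have LBp: "\<exists>b. p \<le> g b \<and> (\<forall>y. p \<le> g y \<longrightarrow> b \<le> y)" if "p \<in> P" for p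
  proof -
    have "has_least (g -` {p})" using H that by (rule bspec)
    then obtain m where m0: "m \<in> g -` {p}" "\<forall>y\<in>g -` {p}. m \<le> y"
      unfolding has_least_def by (elim bexE) (intro that)
    have gm: "g m = p" using m0(1) by simp
    have mle: "m \<le> y" if "g y = p" for y using m0(2) that by simp
    have "m \<le> y" if "p \<le> g y" for y
    proof -
      have "g (inf m y) = inf (g m) (g y)" using assms(2) unfolding lattice_hom_def by (elim allE conjE)
      also have "\<dots> = p" using that gm by (simp add: inf_absorb1)
      finally have "m \<le> inf m y" by (rule mle)
      then show ?thesis by (rule le_infE)
    qed
    then show ?thesis using gm by (intro exI[of _ m] conjI allI impI) simp_all
  qed
  then have "\<forall>p\<in>P. \<exists>b. p \<le> g b \<and> (\<forall>y. p \<le> g y \<longrightarrow> b \<le> y)" by blast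
  then obtain bp where bp: "\<forall>p\<in>P. p \<le> g (bp p) \<and> (\<forall>y. p \<le> g y \<longrightarrow> bp p \<le> y)"
    by (rule bchoice[elim_format]) blast
  obtain X :: "'a set" where X: "finite X" "lat_gen X = UNIV"
    using assms(1) unfolding finitely_generated_lattice_def generates_def by (elim exE conjE)
  have "d \<in> lat_gen P \<Longrightarrow> LB g d" for d
  proof (induction d rule: lat_gen.induct)
    case (base x) then show ?case using bp unfolding LB_def by blast
  next
    case (inf x y) then show ?case using LB_meet[OF assms(2) X assms(6) assms(4) bp] by simp
  next
    case (sup x y)
    then obtain m1 m2 where m1: "x \<le> g m1" "\<forall>z. x \<le> g z \<longrightarrow> m1 \<le> z"
      and m2: "y \<le> g m2" "\<forall>z. y \<le> g z \<longrightarrow> m2 \<le> z" unfolding LB_def by blast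
    have "g (sup m1 m2) = sup (g m1) (g m2)" using assms(2) unfolding lattice_hom_def by simp
    then have "sup x y \<le> g (sup m1 m2)" using m1 m2 by (simp add: sup.coboundedI1 sup.coboundedI2)
    moreover have "sup m1 m2 \<le> z" if "sup x y \<le> g z" for z using m1 m2 that by simp
    ultimately show ?case unfolding LB_def by blast
  qed
  moreover have "d \<in> lat_gen P" for d using assms(5) unfolding generates_def by simp
  ultimately have LBall: "LB g d" for d by simp
  show "lower_bounded g" unfolding lower_bounded_def
  proof (intro allI disjI2)
    fix d
    obtain m where "d \<le> g m" "\<forall>y. d \<le> g y \<longrightarrow> m \<le> y" using LBall[of d] unfolding LB_def by (elim exE conjE)
    then show "\<exists>m. m \<in> {x. d \<le> g x} \<and> (\<forall>x\<in>{x. d \<le> g x}. m \<le> x)" by (intro exI[of _ m]) simp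
  qed
qed

end
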